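(* In the setting of the context, let $M$ be the central equidistant of $P$. Then the mixed area $$A(M,M)=\frac12\sum_{i=1}^{2n}[M_i,M_{i+1}-M_i]$$ is non-positive.
   Context: $[x,y]$ denotes the determinant of the matrix with columns $x,y\in\mathbb{R}^2$. Fix $n\ge2$; indices are read modulo $2n$. $U$ is a convex $2n$-gon with distinct vertices $U_1,\dots,U_{2n}$ in counterclockwise order with $U_{i+n}=-U_i$. Let $c>0$ and let $P$ be a convex polygon with nonempty interior and vertex list $P_1,\dots,P_{2n}$ (consecutive entries may coincide) with $P_{i+1}-P_i$ a nonnegative multiple of $U_{i+1}-U_i$ and $P_i-P_{i+n}=2cU_i$ for all $i$ (a polygon of constant width in the norm with unit ball $U$). The central equidistant $M$ of $P$ has vertices $M_i=\frac12(P_i+P_{i+n})$. *)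

theory Defs
  imports "HOL-Analysis.Analysis"
begin

definition det2 :: "real^2 \<Rightarrow> real^2 \<Rightarrow> real" where
  "det2 x y = x$1 * y$2 - x$2 * y$1"

text \<open>V (indexed periodically with period m) lists the distinct vertices of a convex
  m-gon in counterclockwise order: every other vertex lies strictly to the left of
  each directed edge V i \<rightarrow> V (i+1).\<close>
definition convex_ccw_polygon :: "nat \<Rightarrow> (nat \<Rightarrow> real^2) \<Rightarrow> bool" where
  "convex_ccw_polygon m V \<longleftrightarrow> 3 \<le> m \<and> (\<forall>i. V (i + m) = V i) \<and> inj_on V {..<m} \<and>
     (\<forall>i<m. \<forall>j<m. j \<noteq> i \<and> j \<noteq> Suc i mod m \<longrightarrow> det2 (V (Suc i) - V i) (V j - V i) > 0)"

definition central_equidistant :: "nat \<Rightarrow> (nat \<Rightarrow> real^2) \<Rightarrow> nat \<Rightarrow> real^2" where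
  "central_equidistant n P i = (1/2) *\<^sub>R (P i + P (i + n))"

definition mixed_area_self :: "nat \<Rightarrow> (nat \<Rightarrow> real^2) \<Rightarrow> real" where
  "mixed_area_self m M = (1/2) * (\<Sum>i<m. det2 (M i) (M (Suc i) - M i))"

end

theory Submission
  imports Defs
begin


lemma det2_self[simp]: "det2 a a = 0" unfolding det2_def by simp
lemma det2_sum_right: "det2 p (sum f A) = (\<Sum>x\<in>A. det2 p (f x))"
  unfolding det2_def by (simp add: sum_distrib_left sum_subtractf)
lemma det2_sum_left: "det2 (sum f A) p = (\<Sum>x\<in>A. det2 (f x) p)"
  unfolding det2_def by (simp add: sum_distrib_right sum_subtractf)
lemma det2_scaleR_right[simp]: "det2 p (t *\<^sub>R x) = t * det2 p x"
  unfolding det2_def by (simp add: algebra_simps)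
lemma det2_scaleR_left[simp]: "det2 (t *\<^sub>R x) p = t * det2 x p"
  unfolding det2_def by (simp add: algebra_simps)
lemma det2_add_left: "det2 (x + y) p = det2 x p + det2 y p"
  unfolding det2_def by (simp add: algebra_simps)
lemma det2_identity:
  "det2 b c * det2 p a = det2 a c * det2 p b - det2 a b * det2 p c"
  unfolding det2_def by (simp add: algebra_simps)
lemma det2_identity2:
  "det2 v y * det2 a b = det2 y b * det2 v a + det2 a y * det2 v b"
  unfolding det2_def by (simp add: algebra_simps)

lemma abel1:
  fixes \<sigma> z :: "nat \<Rightarrow> real"
  shows "(\<Sum>i<m. \<Sum>j<i. \<sigma> j * \<sigma> i * (z i - z j)) =
    (\<Sum>i<m. z i * ((\<Sum>j<Suc i. \<sigma> j)^2 - (\<Sum>j<i. \<sigma> j)^2)) - (\<Sum>j<m. \<sigma> j) * (\<Sum>j<m. \<sigma> j * z j)"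
proof (induction m)
  case 0 then show ?case by simp
next
  case (Suc m)
  have e: "(\<Sum>j<m. \<sigma> j * \<sigma> m * (z m - z j)) = \<sigma> m * z m * (\<Sum>j<m. \<sigma> j) - \<sigma> m * (\<Sum>j<m. \<sigma> j * z j)"
    by (simp add: sum_distrib_left sum_subtractf algebra_simps)
  show ?case using Suc e by (simp add: algebra_simps power2_eq_square)
qed

lemma abel2:
  fixes T z :: "nat \<Rightarrow> real"
  assumes "T 0 = 0" "\<forall>k. Suc k < Suc m \<longrightarrow> z k \<le> z (Suc k)"
  shows "(\<Sum>i<Suc m. z i * ((T (Suc i))^2 - (T i)^2)) \<le> z m * (T (Suc m))^2"
  using assms(2)
proof (induction m)
  case 0 then show ?case using assms(1) by simp
next
  case (Suc m)
  have "z m \<le> z (Suc m)" using Suc.prems by simp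
  then have "z m * (T (Suc m))^2 \<le> z (Suc m) * (T (Suc m))^2"
    by (simp add: mult_right_mono)
  moreover have "(\<Sum>i<Suc m. z i * ((T (Suc i))^2 - (T i)^2)) \<le> z m * (T (Suc m))^2"
    using Suc.IH Suc.prems by simp
  ultimately show ?case by (simp add: right_diff_distrib)
qed

lemma key_ineq:
  fixes d :: "nat \<Rightarrow> real^2" and s :: "nat \<Rightarrow> real"
  assumes n2: "2 \<le> n" and pos: "\<And>j k. j < k \<Longrightarrow> k < n \<Longrightarrow> det2 (d j) (d k) > 0"
   and sum0: "(\<Sum>i<n. s i *\<^sub>R d i) = 0"
  shows "(\<Sum>i<n. \<Sum>j<i. s j * s i * det2 (d j) (d i)) \<le> 0"
proof -
  define p where "p = d 0 - d (n-1)"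
  define \<phi> where "\<phi> i = det2 p (d i)" for i
  define r where "r = d 0"
  define \<sigma> where "\<sigma> i = s i * \<phi> i" for i
  define z where "z i = det2 r (d i) / \<phi> i" for i
  have phi_eq: "\<phi> i = det2 (d 0) (d i) + det2 (d i) (d (n-1))" for i
    unfolding \<phi>_def p_def det2_def by (simp add: algebra_simps)
  have phipos: "\<phi> i > 0" if "i < n" for i
  proof (cases "i = 0")
    case True then show ?thesis using pos[of 0 "n-1"] n2 by (simp add: phi_eq)
  next
    case False
    show ?thesis
    proof (cases "i = n-1")
      case True then show ?thesis using pos[of 0 "n-1"] n2 by (simp add: phi_eq)
    next
      case F2: False
      have "i < n - 1" using F2 that by simp
      then show ?thesis using pos[of 0 i] pos[of i "n-1"] False F2 that by (simp add: phi_eq)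
    qed
  qed
  have phi0: "\<phi> 0 = det2 p r" unfolding \<phi>_def r_def by simp
  have term_eq: "s j * s i * det2 (d j) (d i) * \<phi> 0 = \<sigma> j * \<sigma> i * (z i - z j)"
    if "j < n" "i < n" for i j
  proof -
    have id: "det2 (d j) (d i) * det2 p r = det2 r (d i) * \<phi> j - det2 r (d j) * \<phi> i"
      unfolding \<phi>_def by (rule det2_identity)
    have "\<phi> i \<noteq> 0" "\<phi> j \<noteq> 0" using phipos that by (auto simp: less_imp_neq[symmetric])
    then have "\<sigma> j * \<sigma> i * (z i - z j) = s j * s i * (det2 r (d i) * \<phi> j - det2 r (d j) * \<phi> i)"
      unfolding \<sigma>_def z_def by (simp add: field_simps)
    then show ?thesis using id phi0 by simp
  qed
  have "(\<Sum>i<n. \<Sum>j<i. s j * s i * det2 (d j) (d i)) * \<phi> 0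
      = (\<Sum>i<n. \<Sum>j<i. \<sigma> j * \<sigma> i * (z i - z j))"
    unfolding sum_distrib_right
    by (intro sum.cong refl) (auto intro!: term_eq)
  also have "\<dots> = (\<Sum>i<n. z i * ((\<Sum>j<Suc i. \<sigma> j)^2 - (\<Sum>j<i. \<sigma> j)^2)) - (\<Sum>j<n. \<sigma> j) * (\<Sum>j<n. \<sigma> j * z j)"
    by (rule abel1)
  also have "(\<Sum>j<n. \<sigma> j) = 0"
  proof -
    have "(\<Sum>j<n. \<sigma> j) = det2 p (\<Sum>i<n. s i *\<^sub>R d i)"
      unfolding det2_sum_right \<sigma>_def \<phi>_def by simp
    then show ?thesis using sum0 unfolding det2_def by simp
  qed
  also have "(\<Sum>i<n. z i * ((\<Sum>j<Suc i. \<sigma> j)^2 - (\<Sum>j<i. \<sigma> j)^2)) \<le> 0"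
  proof -
    obtain m where m: "n = Suc m" using n2 by (cases n) auto
    have mono: "\<forall>k. Suc k < Suc m \<longrightarrow> z k \<le> z (Suc k)"
    proof (intro allI impI)
      fix k assume k: "Suc k < Suc m"
      have a: "\<phi> k > 0" "\<phi> (Suc k) > 0" using phipos k m by auto
      have b: "det2 (d k) (d (Suc k)) * \<phi> 0 > 0" using pos[of k "Suc k"] phipos[of 0] k m by auto
      have id: "det2 (d k) (d (Suc k)) * det2 p r = det2 r (d (Suc k)) * \<phi> k - det2 r (d k) * \<phi> (Suc k)"
        unfolding \<phi>_def by (rule det2_identity)
      have "det2 r (d k) * \<phi> (Suc k) \<le> det2 r (d (Suc k)) * \<phi> k"
        using id b phi0 by simp
      then show "z k \<le> z (Suc k)" unfolding z_def using a
        by (simp add: divide_simps mult.commute)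
    qed
    have "(\<Sum>i<Suc m. z i * (((\<lambda>i. \<Sum>j<i. \<sigma> j) (Suc i))^2 - ((\<lambda>i. \<Sum>j<i. \<sigma> j) i)^2))
       \<le> z m * ((\<lambda>i. \<Sum>j<i. \<sigma> j) (Suc m))^2"
      by (rule abel2) (use mono in auto)
    then show ?thesis using `(\<Sum>j<n. \<sigma> j) = 0` m by simp
  qed
  finally have "(\<Sum>i<n. \<Sum>j<i. s j * s i * det2 (d j) (d i)) * \<phi> 0 \<le> 0" by simp
  then show ?thesis using phipos[of 0] n2 by (simp add: mult_le_0_iff)
qed



lemma convex_edge:
  assumes "convex_ccw_polygon N U" "i < N" "k < N" "k \<noteq> i" "k \<noteq> Suc i mod N"
  shows "det2 (U (Suc i) - U i) (U k - U i) > 0"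
  using assms unfolding convex_ccw_polygon_def by blast

lemma cone:
  assumes U: "convex_ccw_polygon N U" and k: "1 \<le> k" "Suc k < N" and m: "m < N"
    and h1: "det2 v (U (Suc k) - U k) \<le> 0" and h2: "det2 v (U (k-1) - U k) \<le> 0"
  shows "det2 v (U m - U k) \<le> 0"
proof (cases "m = k - 1 \<or> m = k \<or> m = Suc k")
  case True then show ?thesis using h1 h2 unfolding det2_def by auto
next
  case False
  define a where "a = U (Suc k) - U k"
  define b where "b = U (k-1) - U k"
  define y where "y = U m - U k"
  have smod: "Suc k mod N = Suc k" using k by simp
  have ay: "det2 a y > 0" unfolding a_def y_def
    by (rule convex_edge[OF U]) (use k m False smod in auto)
  have ab: "det2 a b > 0" unfolding a_def b_def
    by (rule convex_edge[OF U]) (use k smod in auto)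
  have km1: "Suc (k-1) = k" using k by simp
  have "det2 (U (Suc (k-1)) - U (k-1)) (U m - U (k-1)) > 0"
    by (rule convex_edge[OF U]) (use k m False km1 in auto)
  then have yb: "det2 y b > 0" unfolding y_def b_def km1 det2_def by (simp add: algebra_simps)
  have id: "det2 v y * det2 a b = det2 y b * det2 v a + det2 a y * det2 v b"
    by (rule det2_identity2)
  have "det2 y b * det2 v a \<le> 0" using yb h1 unfolding a_def by (simp add: mult_nonneg_nonpos)
  moreover have "det2 a y * det2 v b \<le> 0" using ay h2 unfolding b_def by (simp add: mult_nonneg_nonpos)
  ultimately have "det2 v y * det2 a b \<le> 0" using id by simp
  then show ?thesis using ab unfolding y_def by (simp add: mult_le_0_iff)
qed

lemma turn_step:
  assumes U: "convex_ccw_polygon (2*n) U" and U_sym: "\<forall>i. U (i + n) = - U i"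
    and n2: "2 \<le> n" and j: "j < n" and k: "j + 1 \<le> k" "k + 1 \<le> j + n"
    and h: "det2 (U (Suc j) - U j) (U (k-1) - U k) \<le> 0"
  shows "det2 (U (Suc j) - U j) (U (Suc k) - U k) > 0"
proof (rule ccontr)
  define d where "d = U (Suc j) - U j"
  assume "\<not> ?thesis"
  then have h1: "det2 d (U (Suc k) - U k) \<le> 0" unfolding d_def by simp
  have c: "det2 d (U (j+n) - U k) \<le> 0"
    by (rule cone[OF U _ _ _ h1 h[folded d_def]]) (use k j in auto)
  have "det2 (U (Suc (j+n)) - U (j+n)) (U k - U (j+n)) > 0"
  proof (rule convex_edge[OF U])
    show "k \<noteq> Suc (j + n) mod (2 * n)"
    proof (cases "Suc (j+n) < 2*n")
      case True then show ?thesis using k by simp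
    next
      case False then have "Suc (j+n) = 2*n" using j by simp
      then have "Suc (j + n) mod (2 * n) = 0" by (metis mod_self)
      then show ?thesis using k by simp
    qed
  qed (use j k in auto)
  moreover have "U (Suc (j+n)) = - U (Suc j)" "U (j+n) = - U j"
    using U_sym by (metis add_Suc)+
  ultimately have "det2 (- d) (U k + U j) > 0" unfolding d_def by (simp add: algebra_simps)
  moreover have "det2 d (U (j+n) - U k) = - det2 d (U k + U j)"
    using U_sym unfolding det2_def by (simp add: algebra_simps)
  ultimately show False using c unfolding det2_def by (simp add: algebra_simps)
qed

lemma turning:
  assumes U: "convex_ccw_polygon (2*n) U" and U_sym: "\<forall>i. U (i + n) = - U i"
    and n2: "2 \<le> n" and j: "j < n"
  shows "l + 1 < n \<Longrightarrow> det2 (U (Suc j) - U j) (U (Suc (j+l+1)) - U (j+l+1)) > 0"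
proof (induction l)
  case 0
  have A: "det2 (U (Suc j) - U j) (U (j+0+1-1) - U (j+0+1)) \<le> 0"
    unfolding det2_def by (simp add: algebra_simps)
  show ?case by (rule turn_step[OF U U_sym n2 j _ _ A]) (use 0 in auto)
next
  case (Suc l)
  then have "det2 (U (Suc j) - U j) (U (Suc (j+l+1)) - U (j+l+1)) > 0" by simp
  then have A: "det2 (U (Suc j) - U j) (U (j+Suc l+1-1) - U (j + Suc l+1)) \<le> 0"
    unfolding det2_def by (simp add: algebra_simps)
  show ?case by (rule turn_step[OF U U_sym n2 j _ _ A]) (use Suc in auto)
qed

lemma turning2:
  assumes U: "convex_ccw_polygon (2*n) U" and U_sym: "\<forall>i. U (i + n) = - U i"
    and n2: "2 \<le> n" and jk: "j < k" "k < n"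
  shows "det2 (U (Suc j) - U j) (U (Suc k) - U k) > 0"
  using turning[OF U U_sym n2 _, of j "k - j - 1"] jk by simp



lemma sum_split_nn:
  fixes g :: "nat \<Rightarrow> real"
  shows "(\<Sum>i<n+m. g i) = (\<Sum>i<n. g i) + (\<Sum>i<m. g (i+n))"
  by (induction m) (auto simp: add.commute add.left_commute)

theorem lemma3p3:
  fixes n :: nat and c :: real and U P :: "nat \<Rightarrow> real^2"
  assumes n2: "2 \<le> n"
    and U_poly: "convex_ccw_polygon (2*n) U"
    and U_sym: "\<forall>i. U (i + n) = - U i"
    and c_pos: "c > 0"
    and P_per: "\<forall>i. P (i + 2*n) = P i"
    and P_edges: "\<forall>i. \<exists>t\<ge>0. P (Suc i) - P i = t *\<^sub>R (U (Suc i) - U i)"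
    and P_width: "\<forall>i. P i - P (i + n) = (2*c) *\<^sub>R U i"
    and P_int: "interior (convex hull (P ` {..<2*n})) \<noteq> {}"
  shows "mixed_area_self (2*n) (central_equidistant n P) \<le> 0"
proof -
  define d where "d i = U (Suc i) - U i" for i
  obtain t where t: "\<And>i. P (Suc i) - P i = t i *\<^sub>R d i"
    using P_edges unfolding d_def by metis
  define s where "s i = t i - c" for i
  define M where "M = central_equidistant n P"
  have hM: "M (Suc i) - M i = s i *\<^sub>R d i" for i
  proof -
    have e1: "P (Suc i + n) = P (Suc i) - (2*c) *\<^sub>R U (Suc i)"
      using P_width[rule_format, of "Suc i"] by (simp add: algebra_simps)
    have e2: "P (i + n) = P i - (2*c) *\<^sub>R U i"
      using P_width[rule_format, of i] by (simp add: algebra_simps)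
    have "M (Suc i) - M i = (P (Suc i) - P i) - c *\<^sub>R d i"
      unfolding M_def central_equidistant_def e1 e2 d_def
      by (simp add: vec_eq_iff algebra_simps)
    then show ?thesis using t[of i] unfolding s_def by (simp add: algebra_simps)
  qed
  have hMper: "M (i + n) = M i" for i
    unfolding M_def central_equidistant_def
  proof -
    have "P (i + n + n) = P i" using P_per[rule_format, of i] by (simp add: mult_2 add.assoc)
    then show "(1/2) *\<^sub>R (P (i + n) + P (i + n + n)) = (1/2) *\<^sub>R (P i + P (i + n))"
      by (simp add: add.commute)
  qed
  have Mform: "M i = M 0 + (\<Sum>j<i. s j *\<^sub>R d j)" for i
  proof (induction i)
    case 0 then show ?case by simp
  next
    case (Suc i) then show ?case using hM[of i] by (simp add: algebra_simps)
  qed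
  have sum0: "(\<Sum>i<n. s i *\<^sub>R d i) = 0"
    using Mform[of n] hMper[of 0] by simp
  have area: "mixed_area_self (2*n) M = (\<Sum>i<n. det2 (M i) (M (Suc i) - M i))"
  proof -
    have "(\<Sum>i<2*n. det2 (M i) (M (Suc i) - M i)) = (\<Sum>i<n. det2 (M i) (M (Suc i) - M i)) + (\<Sum>i<n. det2 (M (i+n)) (M (Suc (i+n)) - M (i+n)))"
      using sum_split_nn[of "\<lambda>i. det2 (M i) (M (Suc i) - M i)" n n] by (simp add: mult_2)
    also have "(\<Sum>i<n. det2 (M (i+n)) (M (Suc (i+n)) - M (i+n))) = (\<Sum>i<n. det2 (M i) (M (Suc i) - M i))"
      using hMper by (metis add_Suc)
    finally show ?thesis unfolding mixed_area_self_def by simp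
  qed
  also have "\<dots> = (\<Sum>i<n. \<Sum>j<i. s j * s i * det2 (d j) (d i))"
  proof -
    have "(\<Sum>i<n. det2 (M i) (M (Suc i) - M i)) = (\<Sum>i<n. s i * det2 (M 0) (d i) + (\<Sum>j<i. s j * s i * det2 (d j) (d i)))"
      unfolding hM
      by (intro sum.cong refl, subst Mform) (simp add: det2_add_left det2_sum_left sum_distrib_left algebra_simps)
    also have "\<dots> = det2 (M 0) (\<Sum>i<n. s i *\<^sub>R d i) + (\<Sum>i<n. \<Sum>j<i. s j * s i * det2 (d j) (d i))"
      by (simp add: sum.distrib det2_sum_right)
    finally show ?thesis using sum0 unfolding det2_def by simp
  qed
  also have "\<dots> \<le> 0"
    by (rule key_ineq[OF n2]) (use turning2[OF U_poly U_sym n2] sum0 d_def in auto)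
  finally show ?thesis unfolding M_def .
qed

end
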